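(* Let $A$ be a Hausdorff locally quasi-convex abelian topological group. If $A$ is complete (with respect to its group uniformity), or if $\alpha_A$ is surjective, then $A$ has the quasi-convex compactness property.
   Context: $\mathbb{T}=\mathbb{R}/\mathbb{Z}$, $\Lambda_1$ is the image of $[-\tfrac14,\tfrac14]$ in $\mathbb{T}$. $\hat A$ is the group of continuous homomorphisms $A\to\mathbb{T}$ with the compact-open topology and $\alpha_A\colon A\to\hat{\hat A}$, $\alpha_A(a)(\chi)=\chi(a)$. For $S\subseteq A$, $S^\vartriangleright=\{\chi\in\hat A\mid\chi(S)\subseteq\Lambda_1\}$; for $\Phi\subseteq\hat A$, $\Phi^\vartriangleleft=\{a\in A\mid\chi(a)\in\Lambda_1\ \forall\chi\in\Phi\}$. $A$ is locally quasi-convex if $\{U^{\vartriangleright\vartriangleleft}\mid U \text{ a neighborhood of } 0\}$ is a base at $0$. $A$ has the quasi-convex compactness property if $K^{\vartriangleright\vartriangleleft}$ is compact for every compact $K\subseteq A$. *)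

theory Defs
  imports "HOL-Analysis.Analysis"
begin

text \<open>The circle group T = R/Z is realised as the unit circle in the complex plane,
  via the isomorphism t \<mapsto> cis (2 pi t).\<close>

definition circle :: "complex set" where
  "circle = (\<lambda>t. cis (2 * pi * t)) ` UNIV"

definition Lambda1 :: "complex set" where
  "Lambda1 = (\<lambda>t. cis (2 * pi * t)) ` {-1/4..1/4}"

definition dual :: "('a::topological_ab_group_add \<Rightarrow> complex) set" where
  "dual = {ch. continuous_on UNIV ch \<and> (\<forall>x. ch x \<in> circle) \<and>
              (\<forall>x y. ch (x + y) = ch x * ch y)}"

definition compact_open_dual :: "('a::topological_ab_group_add \<Rightarrow> complex) topology" where
  "compact_open_dual = topology_generated_by
     {{ch \<in> dual. ch ` K \<subseteq> U} | K U. compact K \<and> open U}"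

definition bidual :: "(('a::topological_ab_group_add \<Rightarrow> complex) \<Rightarrow> complex) set" where
  "bidual = {\<psi>. continuous_map (subtopology compact_open_dual dual) (top_of_set circle) \<psi> \<and>
               (\<forall>ch1\<in>dual. \<forall>ch2\<in>dual. \<psi> (\<lambda>x. ch1 x * ch2 x) = \<psi> ch1 * \<psi> ch2)}"

text \<open>alpha_A(a)(chi) = chi(a); alpha_A is surjective onto the bidual.\<close>
definition alpha_surjective :: "'a::topological_ab_group_add itself \<Rightarrow> bool" where
  "alpha_surjective _ \<longleftrightarrow>
     (\<forall>\<psi>\<in>(bidual :: (('a \<Rightarrow> complex) \<Rightarrow> complex) set).
        \<exists>a::'a. \<forall>ch\<in>dual. \<psi> ch = ch a)"

definition polar :: "'a::topological_ab_group_add set \<Rightarrow> ('a \<Rightarrow> complex) set" where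
  "polar S = {ch \<in> dual. ch ` S \<subseteq> Lambda1}"

definition prepolar :: "('a::topological_ab_group_add \<Rightarrow> complex) set \<Rightarrow> 'a set" where
  "prepolar \<Phi> = {a. \<forall>ch\<in>\<Phi>. ch a \<in> Lambda1}"

definition nhd0 :: "'a::topological_ab_group_add set \<Rightarrow> bool" where
  "nhd0 U \<longleftrightarrow> (\<exists>V. open V \<and> 0 \<in> V \<and> V \<subseteq> U)"

definition locally_quasi_convex :: "'a::topological_ab_group_add itself \<Rightarrow> bool" where
  "locally_quasi_convex _ \<longleftrightarrow>
     (\<forall>U::'a set. nhd0 U \<longrightarrow> nhd0 (prepolar (polar U))) \<and>
     (\<forall>W::'a set. nhd0 W \<longrightarrow> (\<exists>U. nhd0 U \<and> prepolar (polar U) \<subseteq> W))"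

definition qc_compactness :: "'a::topological_ab_group_add itself \<Rightarrow> bool" where
  "qc_compactness _ \<longleftrightarrow> (\<forall>K::'a set. compact K \<longrightarrow> compact (prepolar (polar K)))"

text \<open>Cauchy filters and completeness with respect to the group uniformity
  (left and right uniformities coincide since the group is abelian).\<close>
definition group_cauchy :: "'a::topological_ab_group_add filter \<Rightarrow> bool" where
  "group_cauchy F \<longleftrightarrow> (\<forall>U. nhd0 U \<longrightarrow> (\<exists>X. eventually (\<lambda>x. x \<in> X) F \<and>
                                          (\<forall>x\<in>X. \<forall>y\<in>X. x - y \<in> U)))"

definition group_complete :: "'a::topological_ab_group_add itself \<Rightarrow> bool" where
  "group_complete _ \<longleftrightarrow>
     (\<forall>F::'a filter. F \<noteq> bot \<and> group_cauchy F \<longrightarrow> (\<exists>x. F \<le> nhds x))"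

end

theory Submission
  imports Defs
begin

lemma circle_eq: "circle = {z. cmod z = 1}"
proof
  show "circle \<subseteq> {z. cmod z = 1}" unfolding circle_def by auto
  show "{z. cmod z = 1} \<subseteq> circle"
  proof
    fix z :: complex assume "z \<in> {z. cmod z = 1}"
    hence z: "cmod z = 1" by simp
    hence "z \<noteq> 0" by auto
    hence "cis (Arg z) = z" using z by (simp add: cis_Arg sgn_eq)
    hence "z = cis (2 * pi * (Arg z / (2*pi)))" by simp
    thus "z \<in> circle" unfolding circle_def by blast
  qed
qed

lemma cos_nonneg_bound:
  fixes x :: real
  assumes "\<bar>x\<bar> \<le> pi" "cos x \<ge> 0" shows "\<bar>x\<bar> \<le> pi/2"
proof (rule ccontr)
  assume "\<not> \<bar>x\<bar> \<le> pi/2"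
  hence "pi/2 < \<bar>x\<bar>" by simp
  moreover have "\<bar>x\<bar> < 3*pi/2" using assms(1) pi_gt_zero by linarith
  ultimately have "cos \<bar>x\<bar> < 0" by (rule cos_lt_zero_pi)
  moreover have "cos \<bar>x\<bar> = cos x" by (cases "x \<ge> 0") auto
  ultimately show False using assms(2) by simp
qed

lemma Lambda1_eq: "Lambda1 = {z. cmod z = 1 \<and> Re z \<ge> 0}"
proof
  show "Lambda1 \<subseteq> {z. cmod z = 1 \<and> Re z \<ge> 0}"
  proof
    fix z assume "z \<in> Lambda1"
    then obtain t where t: "t \<in> {-1/4..1/4}" "z = cis (2*pi*t)" unfolding Lambda1_def by auto
    have "\<bar>t\<bar> \<le> 1/4" using t(1) by auto
    hence "2*pi*\<bar>t\<bar> \<le> 2*pi*(1/4)" using pi_gt_zero by (intro mult_left_mono) auto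
    hence "\<bar>2*pi*t\<bar> \<le> pi/2" by (simp add: abs_mult)
    hence "-(pi/2) \<le> 2*pi*t" "2*pi*t \<le> pi/2" by linarith+
    hence "cos (2*pi*t) \<ge> 0" by (rule cos_ge_zero)
    thus "z \<in> {z. cmod z = 1 \<and> Re z \<ge> 0}" using t by simp
  qed
  show "{z. cmod z = 1 \<and> Re z \<ge> 0} \<subseteq> Lambda1"
  proof
    fix z :: complex assume "z \<in> {z. cmod z = 1 \<and> Re z \<ge> 0}"
    hence z: "cmod z = 1" "Re z \<ge> 0" by auto
    hence "z \<noteq> 0" by auto
    hence e: "cis (Arg z) = z" using z by (simp add: cis_Arg sgn_eq)
    have "\<bar>Arg z\<bar> \<le> pi" using Arg_bounded[of z] by auto
    moreover have "cos (Arg z) \<ge> 0" using z(2) e by (metis cis.sel(1))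
    ultimately have "\<bar>Arg z\<bar> \<le> pi/2" by (rule cos_nonneg_bound)
    hence b: "-(pi/2) \<le> Arg z" "Arg z \<le> pi/2" by linarith+
    have "Arg z / (2*pi) \<le> 1/4" using b(2) pi_gt_zero by (simp add: divide_le_eq)
    moreover have "-1/4 \<le> Arg z / (2*pi)" using b(1) pi_gt_zero by (simp add: le_divide_eq)
    ultimately have "Arg z / (2*pi) \<in> {-1/4..1/4}" by simp
    moreover have "z = cis (2 * pi * (Arg z / (2*pi)))" using e by simp
    ultimately show "z \<in> Lambda1" unfolding Lambda1_def by blast
  qed
qed

lemma cis_minus_one_bound: "cmod (cis t - 1) \<le> 2 * \<bar>t\<bar>"
proof -
  have "cmod (cis t - 1) \<le> \<bar>Re (cis t - 1)\<bar> + \<bar>Im (cis t - 1)\<bar>" by (rule cmod_le)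
  also have "\<dots> = \<bar>cos t - 1\<bar> + \<bar>sin t\<bar>" by simp
  also have "\<bar>sin t\<bar> \<le> \<bar>t\<bar>" by (rule abs_sin_x_le_abs_x)
  moreover have "\<bar>cos t - 1\<bar> \<le> \<bar>t\<bar>"
  proof -
    have "cos t = cos (2 * (t/2))" by simp
    also have "\<dots> = 1 - 2 * (sin (t/2))^2" by (rule cos_double_sin)
    finally have "\<bar>cos t - 1\<bar> = 2 * (sin (t/2))^2" by simp
    also have "\<dots> \<le> 2 * \<bar>sin (t/2)\<bar>"
    proof -
      have "\<bar>sin (t/2)\<bar> \<le> 1" by (rule abs_sin_le_one)
      hence "(sin (t/2))^2 \<le> \<bar>sin (t/2)\<bar>"
        unfolding power2_eq_square abs_mult[symmetric] using mult_left_le[of "\<bar>sin (t/2)\<bar>" "\<bar>sin (t/2)\<bar>"] by (simp add: abs_mult)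
      thus ?thesis by simp
    qed
    also have "\<dots> \<le> 2 * \<bar>t/2\<bar>" using abs_sin_x_le_abs_x[of "t/2"] by simp
    finally show ?thesis by simp
  qed
  ultimately show ?thesis by linarith
qed

lemma power_bound:
  fixes z :: complex and n :: nat
  assumes z: "cmod z = 1" and n: "n \<ge> 1" and pw: "\<forall>j\<in>{1..n}. z^j \<in> Lambda1"
  shows "cmod (z - 1) \<le> pi / n"
proof -
  define th where "th = Arg z"
  have "z \<noteq> 0" using z by auto
  hence e: "z = cis th" using z by (simp add: cis_Arg sgn_eq th_def)
  have c: "cos (real j * th) \<ge> 0" if "1 \<le> j" "j \<le> n" for j
  proof -
    have "z^j \<in> Lambda1" using pw that by auto
    hence "Re (z^j) \<ge> 0" by (simp add: Lambda1_eq)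
    thus ?thesis using e by (simp add: cos_n_Re_cis_pow_n)
  qed
  have t1: "\<bar>th\<bar> \<le> pi/2"
  proof (rule cos_nonneg_bound)
    show "\<bar>th\<bar> \<le> pi" using Arg_bounded[of z] by (auto simp: th_def)
    show "cos th \<ge> 0" using c[of 1] n by simp
  qed
  have "1 \<le> j \<longrightarrow> j \<le> n \<longrightarrow> \<bar>real j * th\<bar> \<le> pi/2" for j
  proof (induction j)
    case 0 then show ?case by simp
  next
    case (Suc j)
    show ?case
    proof (cases "j = 0")
      case True then show ?thesis using t1 by simp
    next
      case False
      show ?thesis
      proof (intro impI)
        assume "Suc j \<le> n"
        hence ih: "\<bar>real j * th\<bar> \<le> pi/2" using Suc False by simp
        have "\<bar>real (Suc j) * th\<bar> = \<bar>real j * th + th\<bar>" by (simp add: algebra_simps)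
        also have "\<dots> \<le> \<bar>real j * th\<bar> + \<bar>th\<bar>" by (rule abs_triangle_ineq)
        finally have "\<bar>real (Suc j) * th\<bar> \<le> pi" using ih t1 by linarith
        thus "\<bar>real (Suc j) * th\<bar> \<le> pi/2" using c[of "Suc j"] \<open>Suc j \<le> n\<close>
          by (intro cos_nonneg_bound) auto
      qed
    qed
  qed
  hence "\<bar>real n * th\<bar> \<le> pi/2" using n by simp
  hence a: "real n * \<bar>th\<bar> \<le> pi/2" by (simp add: abs_mult)
  have np: "real n > 0" using n by simp
  have "(2*\<bar>th\<bar>) * real n \<le> pi" using a by (simp add: algebra_simps)
  hence b: "2*\<bar>th\<bar> \<le> pi / real n" using np by (simp add: pos_le_divide_eq)
  have "cmod (z - 1) \<le> 2 * \<bar>th\<bar>" using e cis_minus_one_bound by simp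
  thus ?thesis using b by linarith
qed


primrec gmul :: "nat \<Rightarrow> 'a::ab_group_add \<Rightarrow> 'a" where
  "gmul 0 v = 0" | "gmul (Suc j) v = v + gmul j v"

lemma gmul_zero [simp]: "gmul j 0 = 0" by (induction j) auto

lemma gmul_cont: "continuous_on UNIV (gmul j :: 'a::topological_ab_group_add \<Rightarrow> 'a)"
proof (induction j)
  case 0 then show ?case by (simp add: continuous_on_const)
next
  case (Suc j)
  have "continuous_on UNIV (\<lambda>v::'a. v + gmul j v)"
    by (intro continuous_on_add continuous_on_id Suc)
  thus ?case by simp
qed

lemma dualD:
  assumes "ch \<in> dual"
  shows "cmod (ch x) = 1" "ch (x + y) = ch x * ch y" "continuous_on UNIV ch"
  using assms unfolding dual_def circle_eq by auto

lemma dual_nz: "ch \<in> dual \<Longrightarrow> ch x \<noteq> 0"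
  using dualD(1)[of ch x] by auto

lemma dual_zero: assumes "ch \<in> dual" shows "ch 0 = 1"
proof -
  have "ch 0 = ch 0 * ch 0" using dualD(2)[OF assms, of 0 0] by simp
  thus ?thesis using dual_nz[OF assms, of 0] by simp
qed

lemma dual_diff: assumes "ch \<in> dual" shows "ch (x - y) = ch x / ch y"
proof -
  have "ch x = ch (x - y) * ch y" using dualD(2)[OF assms, of "x - y" y] by simp
  thus ?thesis using dual_nz[OF assms, of y] by (simp add: field_simps)
qed

lemma dual_gmul: assumes "ch \<in> dual" shows "ch (gmul j v) = ch v ^ j"
  by (induction j) (auto simp: dual_zero[OF assms] dualD(2)[OF assms])

lemma dual_mult: assumes "ch1 \<in> dual" "ch2 \<in> dual" shows "(\<lambda>x. ch1 x * ch2 x) \<in> dual"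
  unfolding dual_def circle_eq
  using dualD[OF assms(1)] dualD[OF assms(2)]
  by (auto intro!: continuous_on_mult simp: norm_mult)

lemma dual_div: assumes "ch1 \<in> dual" "ch2 \<in> dual" shows "(\<lambda>x. ch1 x / ch2 x) \<in> dual"
  unfolding dual_def circle_eq
  using dualD[OF assms(1)] dualD[OF assms(2)] dual_nz[OF assms(2)]
  by (auto intro!: continuous_on_divide simp: norm_divide)

lemma dual_pow: assumes "ch \<in> dual" shows "(\<lambda>x. ch x ^ j) \<in> dual"
  unfolding dual_def circle_eq
  using dualD[OF assms]
  by (auto intro!: continuous_on_power simp: norm_power power_mult_distrib)

lemma norm_diff_unit:
  fixes a b :: complex assumes "cmod b = 1" shows "cmod (a - b) = cmod (a / b - 1)"
proof -
  have "b \<noteq> 0" using assms by auto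
  hence "a - b = b * (a / b - 1)" by (simp add: field_simps)
  hence "cmod (a - b) = cmod b * cmod (a / b - 1)" by (simp add: norm_mult)
  thus ?thesis using assms by simp
qed

lemma closed_Lambda1: "closed Lambda1"
  unfolding Lambda1_eq
  by (intro closed_Collect_conj closed_Collect_eq closed_Collect_le continuous_intros)

lemma small_Lambda1: fixes z :: complex
  assumes "cmod z = 1" "cmod (z - 1) \<le> 1" shows "z \<in> Lambda1"
proof -
  have "\<bar>Re (z - 1)\<bar> \<le> cmod (z - 1)" by (rule abs_Re_le_cmod)
  hence "Re z \<ge> 0" using assms(2) by simp
  thus ?thesis using assms(1) by (simp add: Lambda1_eq)
qed

lemma polar_dual: "polar S \<subseteq> dual" unfolding polar_def by auto

lemma polar_anti: "S \<subseteq> T \<Longrightarrow> polar T \<subseteq> polar S" unfolding polar_def by auto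

lemma prepolar_anti: "S \<subseteq> T \<Longrightarrow> prepolar T \<subseteq> prepolar S" unfolding prepolar_def by auto

lemma dual_cont_at: "ch \<in> dual \<Longrightarrow> continuous (at x) ch"
  using dualD(3)[of ch] continuous_on_eq_continuous_at[of UNIV ch] by auto

lemma prepolar_closed: assumes "\<Phi> \<subseteq> dual" shows "closed (prepolar \<Phi>)"
proof -
  have "prepolar \<Phi> = (\<Inter>ch\<in>\<Phi>. ch -` Lambda1)" unfolding prepolar_def by auto
  moreover have "closed (ch -` Lambda1)" if "ch \<in> \<Phi>" for ch
    using that assms closed_Lambda1 dualD(3) by (intro closed_vimage) auto
  ultimately show ?thesis by auto
qed

lemma equicont:
  fixes V :: "'a::topological_ab_group_add set" and n :: nat
  assumes "open V" "0 \<in> V" "n \<ge> 1"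
  shows "\<exists>V'. open V' \<and> 0 \<in> V' \<and> (\<forall>ch\<in>polar V. \<forall>v\<in>V'. cmod (ch v - 1) \<le> pi / n)"
proof (intro exI conjI ballI)
  define V' where "V' = (\<Inter>j\<in>{1..n}. gmul j -` V)"
  show "open V'" unfolding V'_def
  proof (intro open_INT finite_atLeastAtMost ballI)
    fix j assume "j \<in> {1..n}"
    show "open (gmul j -` V)"
      using assms(1) gmul_cont[of j] by (rule open_vimage)
  qed
  show "0 \<in> V'" unfolding V'_def using assms(2) by auto
  fix ch v assume ch: "ch \<in> polar V" and v: "v \<in> V'"
  have d: "ch \<in> dual" using ch polar_dual by auto
  show "cmod (ch v - 1) \<le> pi / n"
  proof (rule power_bound)
    show "cmod (ch v) = 1" using dualD(1)[OF d] .
    show "n \<ge> 1" by fact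
    show "\<forall>j\<in>{1..n}. ch v ^ j \<in> Lambda1"
    proof
      fix j assume "j \<in> {1..n}"
      hence "gmul j v \<in> V" using v unfolding V'_def by auto
      hence "ch (gmul j v) \<in> Lambda1" using ch unfolding polar_def by auto
      thus "ch v ^ j \<in> Lambda1" using dual_gmul[OF d] by simp
    qed
  qed
qed

lemma Qbound:
  fixes n :: nat
  assumes x: "x \<in> prepolar (polar K)" and d: "ch \<in> dual" and n: "n \<ge> 1"
    and h: "\<forall>j\<in>{1..n}. \<forall>k\<in>K. ch (gmul j k) \<in> Lambda1"
  shows "cmod (ch x - 1) \<le> pi / n"
proof (rule power_bound)
  show "cmod (ch x) = 1" using dualD(1)[OF d] .
  show "n \<ge> 1" by fact
  show "\<forall>j\<in>{1..n}. ch x ^ j \<in> Lambda1"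
  proof
    fix j assume j: "j \<in> {1..n}"
    have "(\<lambda>y. ch y ^ j) \<in> polar K"
      unfolding polar_def using dual_pow[OF d, of j] h j dual_gmul[OF d] by auto
    thus "ch x ^ j \<in> Lambda1" using x unfolding prepolar_def by auto
  qed
qed


lemma exists_n_small: assumes "e > 0" shows "\<exists>n::nat. n \<ge> (1::nat) \<and> pi / real n \<le> e"
proof -
  obtain n :: nat where n: "pi / e < n" using reals_Archimedean2 by blast
  have "0 < pi / e" using assms by simp
  hence "real n > 0" using n by linarith
  hence "n \<ge> 1" by simp
  moreover have "pi / n \<le> e" using n assms \<open>n \<ge> 1\<close> by (simp add: field_simps)
  ultimately show ?thesis by blast
qed

lemma mult_unit_bound:
  fixes a b c d :: complex
  assumes "cmod a = 1" "cmod c = 1"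
  shows "cmod (a * b - c * d) \<le> cmod (b - 1) + cmod (a - c) + cmod (d - 1)"
proof -
  have "a * b - c * d = a * (b - 1) + (a - c) + c * (1 - d)" by (simp add: algebra_simps)
  hence "cmod (a * b - c * d) \<le> cmod (a * (b - 1)) + cmod (a - c) + cmod (c * (1 - d))"
    by (metis order_trans[OF norm_triangle_ineq add_right_mono[OF norm_triangle_ineq]])
  also have "\<dots> = cmod (b - 1) + cmod (a - c) + cmod (d - 1)"
    using assms by (simp add: norm_mult norm_minus_commute)
  finally show ?thesis .
qed

lemma finite_net:
  fixes V L :: "'a::topological_ab_group_add set" and e :: real
  assumes V: "open V" "0 \<in> V" and L: "compact L" and e: "e > 0"
  shows "\<exists>X. finite X \<and> X \<subseteq> polar V \<and>
           (\<forall>ch\<in>polar V. \<exists>ch'\<in>X. \<forall>l\<in>L. cmod (ch l - ch' l) \<le> e)"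
proof -
  obtain n :: nat where n: "n \<ge> 1" "pi / n \<le> e/4" using exists_n_small[of "e/4"] e by auto
  obtain V' where V': "open V'" "0 \<in> V'" "\<forall>ch\<in>polar V. \<forall>v\<in>V'. cmod (ch v - 1) \<le> pi / n"
    using equicont[OF V n(1)] by blast
  have V'e: "cmod (ch v - 1) \<le> e/4" if "ch \<in> polar V" "v \<in> V'" for ch v
  proof -
    have "cmod (ch v - 1) \<le> pi / n" using V'(3) that by blast
    thus ?thesis using n(2) by linarith
  qed
  obtain P where P: "P \<subseteq> L" "finite P" "L \<subseteq> (\<Union>p\<in>P. (\<lambda>x. x - p) -` V')"
  proof (rule compactE_image[OF L])
    show "open ((\<lambda>x. x - p) -` V')" for p
      using V'(1) by (intro open_vimage) (auto intro!: continuous_intros)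
    show "L \<subseteq> (\<Union>p\<in>L. (\<lambda>x. x - p) -` V')" using V'(2) by force
  qed auto
  have sph: "compact {z::complex. cmod z = 1}"
    using compact_sphere[of "0::complex" 1] by (simp add: sphere_def)
  obtain S where S: "finite S" "{z::complex. cmod z = 1} \<subseteq> (\<Union>c\<in>S. ball c (e/4))"
  proof (rule compactE_image[OF sph])
    show "{z::complex. cmod z = 1} \<subseteq> (\<Union>c\<in>{z. cmod z = 1}. ball c (e/4))" using e by force
  qed auto
  define G where "G = PiE P (\<lambda>_. S)"
  have fG: "finite G" unfolding G_def using P(2) S(1) by (intro finite_PiE) auto
  define T where "T g = {ch \<in> polar V. \<forall>p\<in>P. ch p \<in> ball (g p) (e/4)}" for g
  define X where "X = (\<lambda>g. SOME ch. ch \<in> T g) ` {g \<in> G. T g \<noteq> {}}"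
  show ?thesis
  proof (intro exI conjI ballI)
    show "finite X" unfolding X_def using fG by auto
    show "X \<subseteq> polar V"
    proof
      fix ch assume "ch \<in> X"
      then obtain g where g: "T g \<noteq> {}" "ch = (SOME ch. ch \<in> T g)" unfolding X_def by auto
      hence "ch \<in> T g" using someI_ex[of "\<lambda>ch. ch \<in> T g"] by blast
      thus "ch \<in> polar V" unfolding T_def by auto
    qed
    fix ch assume ch: "ch \<in> polar V"
    have chd: "ch \<in> dual" using ch polar_dual by auto
    define g where "g = (\<lambda>p\<in>P. SOME c. c \<in> S \<and> ch p \<in> ball c (e/4))"
    have gp: "g p \<in> S \<and> ch p \<in> ball (g p) (e/4)" if "p \<in> P" for p
    proof -
      have "ch p \<in> {z::complex. cmod z = 1}" using dualD(1)[OF chd] by simp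
      then obtain c where "c \<in> S" "ch p \<in> ball c (e/4)" using S(2) by blast
      hence "\<exists>c. c \<in> S \<and> ch p \<in> ball c (e/4)" by blast
      from someI_ex[OF this] show ?thesis unfolding g_def using that by simp
    qed
    have gG: "g \<in> G" unfolding G_def g_def using gp by (auto simp: g_def)
    have chT: "ch \<in> T g" unfolding T_def using ch gp by auto
    define ch' where "ch' = (SOME ch. ch \<in> T g)"
    have ch'T: "ch' \<in> T g" unfolding ch'_def using chT by (rule someI[of "\<lambda>ch. ch \<in> T g"])
    show "\<exists>ch'\<in>X. \<forall>l\<in>L. cmod (ch l - ch' l) \<le> e"
    proof (intro bexI ballI)
      show "ch' \<in> X" unfolding X_def ch'_def using gG chT by auto
      fix l assume "l \<in> L"
      then obtain p where p: "p \<in> P" "l - p \<in> V'" using P(3) by auto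
      have ch'V: "ch' \<in> polar V" using ch'T unfolding T_def by auto
      have ch'd: "ch' \<in> dual" using ch'V polar_dual by auto
      have l: "l = p + (l - p)" by simp
      have "cmod (ch l - ch' l) = cmod (ch p * ch (l - p) - ch' p * ch' (l - p))"
        using dualD(2)[OF chd, of p "l - p"] dualD(2)[OF ch'd, of p "l - p"] by simp
      also have "\<dots> \<le> cmod (ch (l - p) - 1) + cmod (ch p - ch' p) + cmod (ch' (l - p) - 1)"
        using dualD(1)[OF chd] dualD(1)[OF ch'd] by (intro mult_unit_bound) auto
      also have "cmod (ch p - ch' p) < e/2"
      proof -
        have "dist (g p) (ch p) < e/4" "dist (g p) (ch' p) < e/4"
          using chT ch'T p(1) unfolding T_def by auto
        moreover have "dist (ch p) (ch' p) \<le> dist (ch p) (g p) + dist (g p) (ch' p)" by (rule dist_triangle)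
        moreover have "dist (ch p) (g p) = dist (g p) (ch p)" by (rule dist_commute)
        ultimately have "dist (ch p) (ch' p) < e/2" by linarith
        thus ?thesis by (simp add: dist_norm)
      qed
      finally show "cmod (ch l - ch' l) \<le> e"
        using V'e[OF ch p(2)] V'e[OF ch'V p(2)] by linarith
    qed
  qed
qed


lemma uniform_net:
  fixes K V :: "'a::topological_ab_group_add set"
  assumes K: "compact K" and V: "open V" "0 \<in> V"
  shows "\<exists>X. finite X \<and> X \<subseteq> dual \<and>
    (\<forall>x\<in>prepolar (polar K). \<forall>y\<in>prepolar (polar K).
        (\<forall>ch'\<in>X. cmod (ch' x - ch' y) \<le> 1/4) \<longrightarrow> x - y \<in> prepolar (polar V))"
proof -
  define n :: nat where "n = 16"
  define L where "L = (\<Union>j\<in>{1..n}. gmul j ` K)"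
  have L: "compact L" unfolding L_def
  proof (intro compact_UN finite_atLeastAtMost)
    fix j show "compact (gmul j ` K)"
      using K gmul_cont[of j] by (intro compact_continuous_image) (auto intro: continuous_on_subset)
  qed
  obtain X where X: "finite X" "X \<subseteq> polar V"
    "\<forall>ch\<in>polar V. \<exists>ch'\<in>X. \<forall>l\<in>L. cmod (ch l - ch' l) \<le> 1"
    using finite_net[OF V L, of 1] by auto
  have approx: "\<exists>ch'\<in>X. \<forall>x\<in>prepolar (polar K). cmod (ch x - ch' x) \<le> 1/4" if ch: "ch \<in> polar V" for ch
  proof -
    obtain ch' where ch': "ch' \<in> X" "\<forall>l\<in>L. cmod (ch l - ch' l) \<le> 1" using X(3) ch by blast
    have chd: "ch \<in> dual" using ch polar_dual by auto
    have ch'd: "ch' \<in> dual" using ch' X(2) polar_dual by auto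
    define eta where "eta = (\<lambda>x. ch x / ch' x)"
    have etad: "eta \<in> dual" unfolding eta_def using chd ch'd by (rule dual_div)
    have eq: "cmod (ch x - ch' x) = cmod (eta x - 1)" for x
      unfolding eta_def using dualD(1)[OF ch'd] by (rule norm_diff_unit)
    show ?thesis
    proof (intro bexI ballI)
      show "ch' \<in> X" by fact
      fix x assume x: "x \<in> prepolar (polar K)"
      have "cmod (eta x - 1) \<le> pi / n"
      proof (rule Qbound[OF x etad])
        show "n \<ge> 1" unfolding n_def by simp
        show "\<forall>j\<in>{1..n}. \<forall>k\<in>K. eta (gmul j k) \<in> Lambda1"
        proof (intro ballI)
          fix j k assume "j \<in> {1..n}" "k \<in> K"
          hence "gmul j k \<in> L" unfolding L_def by auto
          hence "cmod (eta (gmul j k) - 1) \<le> 1" using ch'(2) eq by metis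
          thus "eta (gmul j k) \<in> Lambda1" using dualD(1)[OF etad] by (intro small_Lambda1)
        qed
      qed
      also have "pi / n \<le> 1/4" unfolding n_def using pi_less_4 by simp
      finally show "cmod (ch x - ch' x) \<le> 1/4" using eq by simp
    qed
  qed
  show ?thesis
  proof (intro exI conjI ballI impI)
    show "finite X" by fact
    show "X \<subseteq> dual" using X(2) polar_dual by auto
    fix x y assume x: "x \<in> prepolar (polar K)" and y: "y \<in> prepolar (polar K)"
      and cl: "\<forall>ch'\<in>X. cmod (ch' x - ch' y) \<le> 1/4"
    show "x - y \<in> prepolar (polar V)" unfolding prepolar_def
    proof (intro CollectI ballI)
      fix ch assume ch: "ch \<in> polar V"
      have chd: "ch \<in> dual" using ch polar_dual by auto
      obtain ch' where ch': "ch' \<in> X" "\<forall>x\<in>prepolar (polar K). cmod (ch x - ch' x) \<le> 1/4"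
        using approx[OF ch] by blast
      have "cmod (ch (x - y) - 1) = cmod (ch x - ch y)"
        using dual_diff[OF chd] norm_diff_unit[OF dualD(1)[OF chd, of y], of "ch x"] by simp
      also have "\<dots> \<le> cmod (ch x - ch' x) + cmod (ch' x - ch' y) + cmod (ch' y - ch y)"
      proof -
        have "ch x - ch y = (ch x - ch' x) + (ch' x - ch' y) + (ch' y - ch y)" by simp
        thus ?thesis using order_trans[OF norm_triangle_ineq add_right_mono[OF norm_triangle_ineq]] by metis
      qed
      also have "\<dots> \<le> 1/4 + 1/4 + 1/4"
        using ch'(2) x y cl ch'(1) by (intro add_mono) (auto simp: norm_minus_commute)
      finally show "ch (x - y) \<in> Lambda1" using dualD(1)[OF chd] by (intro small_Lambda1) auto
    qed
  qed
qed


lemma ultrafilter_exists: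
  fixes F :: "'a filter"
  assumes "F \<noteq> bot"
  shows "\<exists>M. M \<le> F \<and> M \<noteq> bot \<and> (\<forall>P. eventually P M \<or> eventually (\<lambda>x. \<not> P x) M)"
proof -
  define A where "A = {G. G \<le> F \<and> G \<noteq> bot}"
  define R where "R = (\<lambda>a b::'a filter. b \<le> a)"
  have po: "partial_order_on A (relation_of R A)"
    by (rule partial_order_on_relation_ofI) (auto simp: R_def)
  have "\<exists>m \<in> A. \<forall>a \<in> A. R m a \<longrightarrow> a = m"
  proof (rule predicate_Zorn[OF po])
    fix C assume C: "C \<in> Chains (relation_of R A)"
    have CA: "C \<subseteq> A" using Chains_relation_of[OF C] .
    show "\<exists>u\<in>A. \<forall>a\<in>C. R a u"
    proof (cases "C = {}")
      case True then show ?thesis using assms by (auto simp: A_def)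
    next
      case False
      have base: "\<exists>x\<in>C. x \<le> inf G H" if "G \<in> C" "H \<in> C" for G H
      proof -
        have "(G, H) \<in> relation_of R A \<or> (H, G) \<in> relation_of R A"
          using C that unfolding Chains_def by auto
        hence "H \<le> G \<or> G \<le> H" unfolding relation_of_def R_def by auto
        thus ?thesis
        proof
          assume "H \<le> G" hence "inf G H = H" by (simp add: inf.absorb2) thus ?thesis using that by auto
        next
          assume "G \<le> H" hence "inf G H = G" by (simp add: inf.absorb1) thus ?thesis using that by auto
        qed
      qed
      have "Inf C \<noteq> bot"
      proof
        assume "Inf C = bot"
        hence "eventually (\<lambda>x. False) (Inf C)" by simp
        then obtain b where "b \<in> C" "eventually (\<lambda>x. False) b"
          using eventually_Inf_base[OF False base] by blast
        thus False using CA unfolding A_def by (auto simp: eventually_False)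
      qed
      moreover obtain c where "c \<in> C" using False by blast
      hence "Inf C \<le> F" using CA unfolding A_def by (intro Inf_lower2[of c]) auto
      ultimately show ?thesis unfolding A_def R_def by (auto intro: Inf_lower)
    qed
  qed
  then obtain M where M: "M \<in> A" "\<And>a. a \<in> A \<Longrightarrow> a \<le> M \<Longrightarrow> a = M" unfolding R_def by blast
  show ?thesis
  proof (intro exI conjI allI)
    show "M \<le> F" "M \<noteq> bot" using M(1) unfolding A_def by auto
    fix P
    show "eventually P M \<or> eventually (\<lambda>x. \<not> P x) M"
    proof (rule disjCI)
      assume np: "\<not> eventually (\<lambda>x. \<not> P x) M"
      define G where "G = inf M (principal {x. P x})"
      have "G \<noteq> bot"
      proof
        assume "G = bot"
        hence "eventually (\<lambda>x. False) G" by simp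
        hence "eventually (\<lambda>x. \<not> P x) M" unfolding G_def eventually_inf_principal by simp
        thus False using np by simp
      qed
      moreover have "G \<le> M" unfolding G_def by simp
      ultimately have "G \<in> A" using M(1) unfolding A_def by auto
      hence "G = M" using M(2) \<open>G \<le> M\<close> by blast
      moreover have "eventually P G" unfolding G_def eventually_inf_principal by simp
      ultimately show "eventually P M" by simp
    qed
  qed
qed

lemma ultra_lim:
  fixes f :: "'a \<Rightarrow> 'b::t2_space"
  assumes M: "M \<noteq> bot" "\<forall>P. eventually P M \<or> eventually (\<lambda>x. \<not> P x) M"
    and C: "compact C" "eventually (\<lambda>x. f x \<in> C) M"
  shows "\<exists>c\<in>C. (f \<longlongrightarrow> c) M"
proof -
  have "filtermap f M \<noteq> bot" using M(1) by (simp add: filtermap_bot_iff)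
  moreover have "eventually (\<lambda>y. y \<in> C) (filtermap f M)" using C(2) by (simp add: eventually_filtermap)
  ultimately obtain c where c: "c \<in> C" "inf (nhds c) (filtermap f M) \<noteq> bot"
    using C(1) unfolding compact_filter by blast
  have "filtermap f M \<le> nhds c" unfolding le_nhds
  proof (intro allI impI)
    fix S assume S: "open S \<and> c \<in> S"
    show "eventually (\<lambda>x. x \<in> S) (filtermap f M)"
    proof (rule ccontr)
      assume "\<not> eventually (\<lambda>x. x \<in> S) (filtermap f M)"
      hence "\<not> eventually (\<lambda>x. f x \<in> S) M" by (simp add: eventually_filtermap)
      hence "eventually (\<lambda>x. f x \<notin> S) M" using M(2) by blast
      hence "eventually (\<lambda>y. y \<notin> S) (filtermap f M)" by (simp add: eventually_filtermap)
      hence e1: "eventually (\<lambda>y. y \<notin> S) (inf (nhds c) (filtermap f M))"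
        by (rule filter_leD[OF inf_le2])
      have "eventually (\<lambda>y. y \<in> S) (nhds c)" using S by (simp add: eventually_nhds_in_open)
      hence e2: "eventually (\<lambda>y. y \<in> S) (inf (nhds c) (filtermap f M))"
        by (rule filter_leD[OF inf_le1])
      have "eventually (\<lambda>y. False) (inf (nhds c) (filtermap f M))"
        using eventually_conj[OF e1 e2] by (rule eventually_mono) auto
      thus False using c(2) by (simp add: eventually_False)
    qed
  qed
  thus ?thesis using c(1) unfolding filterlim_def by blast
qed


lemma co_nbhd:
  fixes L :: "'a::topological_ab_group_add set"
  assumes L: "compact L" and ch0: "ch0 \<in> dual"
  shows "\<exists>T. openin compact_open_dual T \<and> ch0 \<in> T \<and>
             (\<forall>ch\<in>T. ch \<in> dual \<and> (\<forall>l\<in>L. cmod (ch l - ch0 l) < 1))"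
proof -
  have sph: "compact {z::complex. cmod z = 1}"
    using compact_sphere[of "0::complex" 1] by (simp add: sphere_def)
  obtain S where S: "finite S" "{z::complex. cmod z = 1} \<subseteq> (\<Union>c\<in>S. ball c (1/4))"
  proof (rule compactE_image[OF sph])
    show "{z::complex. cmod z = 1} \<subseteq> (\<Union>c\<in>{z. cmod z = 1}. ball c (1/4))" by force
  qed auto
  have Sne: "S \<noteq> {}"
  proof
    assume "S = {}"
    have "(1::complex) \<in> {z::complex. cmod z = 1}" by simp
    hence "(1::complex) \<in> (\<Union>c\<in>S. ball c (1/4))" using S(2) by blast
    thus False using \<open>S = {}\<close> by simp
  qed
  define Kc where "Kc c = L \<inter> ch0 -` cball c (1/4)" for c
  define G where "G c = {ch \<in> dual. ch ` Kc c \<subseteq> ball c (1/2)}" for c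
  have Kc: "compact (Kc c)" for c
    unfolding Kc_def using L dualD(3)[OF ch0]
    by (intro compact_Int_closed closed_vimage closed_cball) auto
  have Go: "openin compact_open_dual (G c)" for c
    unfolding compact_open_dual_def G_def
    by (rule topology_generated_by_Basis) (use Kc in blast)
  define T where "T = \<Inter>(G ` S)"
  show ?thesis
  proof (rule exI, intro conjI)
    show "openin compact_open_dual T" unfolding T_def
      using S(1) Sne Go by (intro openin_Inter) auto
    show "ch0 \<in> T" unfolding T_def G_def Kc_def using ch0 by (auto simp: dist_commute)
    show "\<forall>ch\<in>T. ch \<in> dual \<and> (\<forall>l\<in>L. cmod (ch l - ch0 l) < 1)"
    proof (intro ballI conjI)
      fix ch assume ch: "ch \<in> T"
      show "ch \<in> dual" using ch Sne unfolding T_def G_def by auto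
      fix l assume l: "l \<in> L"
      have "ch0 l \<in> {z. cmod z = 1}" using dualD(1)[OF ch0] by simp
      then obtain c where c: "c \<in> S" "ch0 l \<in> ball c (1/4)" using S(2) by blast
      hence "l \<in> Kc c" unfolding Kc_def using l by auto
      moreover have "ch ` Kc c \<subseteq> ball c (1/2)" using ch c(1) unfolding T_def G_def by auto
      ultimately have "ch l \<in> ball c (1/2)" by blast
      hence "dist c (ch l) < 1/2" "dist c (ch0 l) < 1/4" using c(2) by auto
      moreover have "dist (ch l) (ch0 l) \<le> dist (ch l) c + dist c (ch0 l)" by (rule dist_triangle)
      moreover have "dist (ch l) c = dist c (ch l)" by (rule dist_commute)
      ultimately have "dist (ch l) (ch0 l) < 1" by linarith
      thus "cmod (ch l - ch0 l) < 1" by (simp add: dist_norm)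
    qed
  qed
qed


lemma compact_L:
  fixes K :: "'a::topological_ab_group_add set"
  assumes K: "compact K" shows "compact (\<Union>j\<in>{1..n}. gmul j ` K)"
proof (intro compact_UN finite_atLeastAtMost)
  fix j show "compact (gmul j ` K)"
    using K gmul_cont[of j] by (intro compact_continuous_image) (auto intro: continuous_on_subset)
qed

lemma lqc_base:
  assumes "locally_quasi_convex TYPE('a::topological_ab_group_add)" and "nhd0 (W::'a set)"
  shows "\<exists>V. open V \<and> 0 \<in> V \<and> prepolar (polar V) \<subseteq> W"
proof -
  obtain U where U: "nhd0 U" "prepolar (polar U) \<subseteq> W"
    using assms unfolding locally_quasi_convex_def by blast
  obtain V where V: "open V" "0 \<in> V" "V \<subseteq> U" using U(1) unfolding nhd0_def by blast
  have "prepolar (polar V) \<subseteq> prepolar (polar U)"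
    by (intro prepolar_anti polar_anti V(3))
  thus ?thesis using V U(2) by blast
qed

lemma sph_compact: "compact {z::complex. cmod z = 1}"
  using compact_sphere[of "0::complex" 1] by (simp add: sphere_def)

theorem mainTheorem8:
  assumes "locally_quasi_convex TYPE('a::{topological_ab_group_add, t2_space})"
    and "group_complete TYPE('a) \<or> alpha_surjective TYPE('a)"
  shows "qc_compactness TYPE('a)"
  unfolding qc_compactness_def
proof (intro allI impI)
  have base: "\<exists>V. open V \<and> 0 \<in> V \<and> prepolar (polar V) \<subseteq> W" if "nhd0 W" for W :: "'a set"
    using lqc_base[OF assms(1) that] .
  fix K :: "'a set" assume K: "compact K"
  define Q where "Q = prepolar (polar K)"
  have Qc: "closed Q" unfolding Q_def using polar_dual by (rule prepolar_closed)
  have "compact Q" unfolding compact_filter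
  proof (intro allI impI)
    fix F :: "'a filter" assume F: "F \<noteq> bot" "eventually (\<lambda>x. x \<in> Q) F"
    obtain M where M: "M \<le> F" "M \<noteq> bot" "\<forall>P. eventually P M \<or> eventually (\<lambda>x. \<not> P x) M"
      using ultrafilter_exists[OF F(1)] by blast
    have MQ: "eventually (\<lambda>x. x \<in> Q) M" using filter_leD[OF M(1) F(2)] .
    define psi where "psi ch = Lim M ch" for ch :: "'a \<Rightarrow> complex"
    have lim: "(ch \<longlongrightarrow> psi ch) M \<and> cmod (psi ch) = 1" if "ch \<in> dual" for ch
    proof -
      have ev: "eventually (\<lambda>x. ch x \<in> {z. cmod z = 1}) M" using dualD(1)[OF that] by simp
      obtain c where c: "c \<in> {z. cmod z = 1}" "(ch \<longlongrightarrow> c) M"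
        using ultra_lim[OF M(2) M(3) sph_compact ev] by blast
      have "psi ch = c" unfolding psi_def using c(2) M(2) by (intro tendsto_Lim) auto
      thus ?thesis using c by simp
    qed
    have close: "eventually (\<lambda>x. \<forall>ch\<in>X. cmod (ch x - psi ch) < e) M"
      if "finite X" "X \<subseteq> dual" "e > 0" for X e
      using that(1)
    proof (rule eventually_ball_finite, intro ballI)
      fix ch assume "ch \<in> X"
      hence "(ch \<longlongrightarrow> psi ch) M" using lim that(2) by blast
      hence "eventually (\<lambda>x. dist (ch x) (psi ch) < e) M" using that(3) by (simp add: tendsto_iff)
      thus "eventually (\<lambda>x. cmod (ch x - psi ch) < e) M" by (simp add: dist_norm)
    qed
    have tri: "cmod (a - b) \<le> cmod (a - c) + cmod (b - c)" for a b c :: complex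
      by (metis dist_norm dist_triangle2)
    have "\<exists>a\<in>Q. M \<le> nhds a"
      using assms(2)
    proof
      assume compl: "group_complete TYPE('a)"
      have "group_cauchy M" unfolding group_cauchy_def
      proof (intro allI impI)
        fix U :: "'a set" assume "nhd0 U"
        then obtain V where V: "open V" "0 \<in> V" "prepolar (polar V) \<subseteq> U" using base by blast
        obtain X where X: "finite X" "X \<subseteq> dual"
          "\<forall>x\<in>Q. \<forall>y\<in>Q. (\<forall>ch'\<in>X. cmod (ch' x - ch' y) \<le> 1/4) \<longrightarrow> x - y \<in> prepolar (polar V)"
          using uniform_net[OF K V(1,2)] unfolding Q_def by blast
        define X' where "X' = {x\<in>Q. \<forall>ch\<in>X. cmod (ch x - psi ch) < 1/8}"
        show "\<exists>X'. eventually (\<lambda>x. x \<in> X') M \<and> (\<forall>x\<in>X'. \<forall>y\<in>X'. x - y \<in> U)"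
        proof (intro exI conjI ballI)
          show "eventually (\<lambda>x. x \<in> X') M"
            using eventually_conj[OF MQ close[OF X(1) X(2), of "1/8"]] unfolding X'_def by simp
          fix x y assume x: "x \<in> X'" and y: "y \<in> X'"
          have "\<forall>ch'\<in>X. cmod (ch' x - ch' y) \<le> 1/4"
          proof
            fix ch assume "ch \<in> X"
            hence "cmod (ch x - psi ch) < 1/8" "cmod (ch y - psi ch) < 1/8" using x y unfolding X'_def by auto
            thus "cmod (ch x - ch y) \<le> 1/4" using tri[of "ch x" "ch y" "psi ch"] by linarith
          qed
          hence "x - y \<in> prepolar (polar V)" using X(3) x y unfolding X'_def by blast
          thus "x - y \<in> U" using V(3) by blast
        qed
      qed
      then obtain a where a: "M \<le> nhds a" using compl M(2) unfolding group_complete_def by blast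
      have "((\<lambda>x. x) \<longlongrightarrow> a) M" using a by (simp add: filterlim_def filtermap_ident)
      hence "a \<in> Q" using Lim_in_closed_set[of Q "\<lambda>x. x" M a] Qc MQ M(2) by blast
      thus ?thesis using a by blast
    next
      assume alphas: "alpha_surjective TYPE('a)"
      have psi_mult: "psi (\<lambda>x. ch1 x * ch2 x) = psi ch1 * psi ch2"
        if "ch1 \<in> dual" "ch2 \<in> dual" for ch1 ch2
        unfolding psi_def[of "\<lambda>x. ch1 x * ch2 x"]
        using lim[OF that(1)] lim[OF that(2)] M(2) by (intro tendsto_Lim tendsto_mult) auto
      have est: "cmod (psi ch - psi ch0) \<le> pi / n"
        if ch: "ch \<in> dual" and ch0: "ch0 \<in> dual" and n: "n \<ge> 1"
          and sm: "\<forall>l\<in>(\<Union>j\<in>{1..n}. gmul j ` K). cmod (ch l - ch0 l) < 1"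
        for ch ch0 and n :: nat
      proof -
        define eta where "eta = (\<lambda>x. ch x / ch0 x)"
        have etad: "eta \<in> dual" unfolding eta_def using ch ch0 by (rule dual_div)
        have eq: "cmod (ch x - ch0 x) = cmod (eta x - 1)" for x
          unfolding eta_def using dualD(1)[OF ch0] by (rule norm_diff_unit)
        have "eventually (\<lambda>x. eta x \<in> cball 1 (pi / n)) M"
          using MQ
        proof (rule eventually_mono)
          fix x assume "x \<in> Q"
          have "cmod (eta x - 1) \<le> pi / n"
          proof (rule Qbound[OF _ etad n])
            show "x \<in> prepolar (polar K)" using \<open>x \<in> Q\<close> unfolding Q_def .
            show "\<forall>j\<in>{1..n}. \<forall>k\<in>K. eta (gmul j k) \<in> Lambda1"
            proof (intro ballI)
              fix j k assume "j \<in> {1..n}" "k \<in> K"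
              hence "cmod (ch (gmul j k) - ch0 (gmul j k)) < 1" using sm by blast
              hence "cmod (eta (gmul j k) - 1) \<le> 1" using eq by simp
              thus "eta (gmul j k) \<in> Lambda1" using dualD(1)[OF etad] by (intro small_Lambda1)
            qed
          qed
          thus "eta x \<in> cball 1 (pi / n)" by (simp add: dist_norm norm_minus_commute)
        qed
        hence pe: "psi eta \<in> cball 1 (pi / n)"
          using Lim_in_closed_set[OF closed_cball _ M(2)] lim[OF etad] by blast
        have "((\<lambda>x. eta x * ch0 x) \<longlongrightarrow> psi eta * psi ch0) M"
          using lim[OF etad] lim[OF ch0] by (intro tendsto_mult) auto
        moreover have "(\<lambda>x. eta x * ch0 x) = ch" unfolding eta_def using dual_nz[OF ch0] by auto
        ultimately have "(ch \<longlongrightarrow> psi eta * psi ch0) M" by simp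
        hence "psi ch = psi eta * psi ch0" unfolding psi_def[of ch] using M(2) by (intro tendsto_Lim) auto
        hence "cmod (psi ch - psi ch0) = cmod (psi ch0 * (psi eta - 1))" by (simp add: algebra_simps)
        also have "\<dots> = cmod (psi eta - 1)" using lim[OF ch0] by (simp add: norm_mult)
        also have "\<dots> \<le> pi / n" using pe by (simp add: dist_norm norm_minus_commute)
        finally show ?thesis .
      qed
      have cont: "continuous_map (subtopology compact_open_dual dual) (top_of_set circle) psi"
        unfolding continuous_map
      proof (intro conjI allI impI)
        show "psi ` topspace (subtopology compact_open_dual dual) \<subseteq> topspace (top_of_set circle)"
          using lim by (auto simp: circle_eq)
        fix U assume "openin (top_of_set circle) U"
        then obtain Op where Op: "open Op" "U = circle \<inter> Op" unfolding openin_open by blast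
        show "openin (subtopology compact_open_dual dual)
                {x \<in> topspace (subtopology compact_open_dual dual). psi x \<in> U}"
          unfolding openin_subopen[of _ "{x \<in> topspace (subtopology compact_open_dual dual). psi x \<in> U}"]
        proof (intro ballI)
          fix ch0 assume ch0: "ch0 \<in> {x \<in> topspace (subtopology compact_open_dual dual). psi x \<in> U}"
          have ch0d: "ch0 \<in> dual" using ch0 by auto
          have "psi ch0 \<in> Op" using ch0 Op(2) by auto
          then obtain r where r: "r > 0" "ball (psi ch0) r \<subseteq> Op" using Op(1) open_contains_ball by blast
          obtain n :: nat where n: "n \<ge> 1" "pi / n \<le> r/2" using exists_n_small[of "r/2"] r(1) by auto
          obtain T where T: "openin compact_open_dual T" "ch0 \<in> T"
            "\<forall>ch\<in>T. ch \<in> dual \<and> (\<forall>l\<in>(\<Union>j\<in>{1..n}. gmul j ` K). cmod (ch l - ch0 l) < 1)"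
            using co_nbhd[OF compact_L[OF K, of n] ch0d] by blast
          show "\<exists>T'. openin (subtopology compact_open_dual dual) T' \<and> ch0 \<in> T' \<and>
                  T' \<subseteq> {x \<in> topspace (subtopology compact_open_dual dual). psi x \<in> U}"
          proof (intro exI conjI)
            show "openin (subtopology compact_open_dual dual) (T \<inter> dual)"
              using T(1) by (rule openin_subtopology_Int)
            show "ch0 \<in> T \<inter> dual" using T(2) ch0d by simp
            show "T \<inter> dual \<subseteq> {x \<in> topspace (subtopology compact_open_dual dual). psi x \<in> U}"
            proof
              fix ch assume ch: "ch \<in> T \<inter> dual"
              have chd: "ch \<in> dual" using ch by simp
              have "cmod (psi ch - psi ch0) \<le> pi / n"
                using est[OF chd ch0d n(1)] T(3) ch by blast
              moreover have "cmod (psi ch0 - psi ch) = cmod (psi ch - psi ch0)" by (rule norm_minus_commute)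
              ultimately have "cmod (psi ch0 - psi ch) < r" using n(2) r(1) by linarith
              hence "psi ch \<in> ball (psi ch0) r" by (simp add: dist_norm)
              hence "psi ch \<in> Op" using r(2) by blast
              moreover have "psi ch \<in> circle" using lim[OF chd] by (simp add: circle_eq)
              moreover have "ch \<in> topspace compact_open_dual" using openin_subset[OF T(1)] ch by blast
              ultimately show "ch \<in> {x \<in> topspace (subtopology compact_open_dual dual). psi x \<in> U}"
                using Op(2) chd by simp
            qed
          qed
        qed
      qed
      have "psi \<in> bidual" unfolding bidual_def using cont psi_mult by blast
      then obtain a :: 'a where a: "\<forall>ch\<in>dual. psi ch = ch a"
        using alphas unfolding alpha_surjective_def by blast
      have aQ: "a \<in> Q" unfolding Q_def prepolar_def
      proof (intro CollectI ballI)
        fix ch assume ch: "ch \<in> polar K"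
        have chd: "ch \<in> dual" using ch polar_dual by auto
        have "eventually (\<lambda>x. ch x \<in> Lambda1) M"
          using MQ by (rule eventually_mono) (use ch in \<open>auto simp: Q_def prepolar_def\<close>)
        hence "psi ch \<in> Lambda1" using Lim_in_closed_set[OF closed_Lambda1 _ M(2)] lim[OF chd] by blast
        thus "ch a \<in> Lambda1" using a chd by simp
      qed
      have "M \<le> nhds a" unfolding le_nhds
      proof (intro allI impI)
        fix S assume S: "open S \<and> a \<in> S"
        define W where "W = (\<lambda>w. w + a) -` S"
        have "open W" unfolding W_def using S by (intro open_vimage) (auto intro!: continuous_intros)
        moreover have "0 \<in> W" unfolding W_def using S by simp
        ultimately have "nhd0 W" unfolding nhd0_def by blast
        then obtain V where V: "open V" "0 \<in> V" "prepolar (polar V) \<subseteq> W" using base by blast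
        obtain X where X: "finite X" "X \<subseteq> dual"
          "\<forall>x\<in>Q. \<forall>y\<in>Q. (\<forall>ch'\<in>X. cmod (ch' x - ch' y) \<le> 1/4) \<longrightarrow> x - y \<in> prepolar (polar V)"
          using uniform_net[OF K V(1,2)] unfolding Q_def by blast
        have c4: "eventually (\<lambda>x. \<forall>ch\<in>X. cmod (ch x - psi ch) < 1/4) M"
          by (rule close[OF X(1) X(2)]) simp
        show "eventually (\<lambda>x. x \<in> S) M"
          using eventually_conj[OF MQ c4]
        proof (rule eventually_mono)
          fix x assume x: "x \<in> Q \<and> (\<forall>ch\<in>X. cmod (ch x - psi ch) < 1/4)"
          have "\<forall>ch'\<in>X. cmod (ch' x - ch' a) \<le> 1/4" using x a X(2) by fastforce
          hence "x - a \<in> prepolar (polar V)" using X(3) x aQ by blast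
          hence "x - a \<in> W" using V(3) by blast
          thus "x \<in> S" unfolding W_def by simp
        qed
      qed
      thus ?thesis using aQ by blast
    qed
    then obtain a where a: "a \<in> Q" "M \<le> nhds a" by blast
    have "M \<le> inf (nhds a) F" using a(2) M(1) by simp
    hence "inf (nhds a) F \<noteq> bot" using M(2) by (metis bot_unique)
    thus "\<exists>a\<in>Q. inf (nhds a) F \<noteq> bot" using a(1) by blast
  qed
  thus "compact (prepolar (polar K))" unfolding Q_def .
qed

end
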